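(* Let $\boldsymbol{Q}$ be a real $(d\times d)$ orthogonal matrix. Then $\boldsymbol{Q}$ can be factorized as $\boldsymbol{Q}=\boldsymbol{P}\boldsymbol{L}\boldsymbol{R}^{-1}$, where $\boldsymbol{P}$ is a $(d\times d)$ permutation matrix and $\boldsymbol{L}$ is a $(d\times d)$ unit lower triangular matrix such that $\boldsymbol{Q}=\boldsymbol{P}\boldsymbol{L}\boldsymbol{U}$ for some $(d\times d)$ upper triangular matrix $\boldsymbol{U}$ (a PLU decomposition of $\boldsymbol{Q}$), and $\boldsymbol{R}$ is the upper triangular matrix in the QR decomposition $\boldsymbol{P}\boldsymbol{L}=\widetilde{\boldsymbol{Q}}\boldsymbol{R}$ of the invertible matrix $\boldsymbol{P}\boldsymbol{L}$ (with $\widetilde{\boldsymbol{Q}}$ orthogonal).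
   Context: A unit lower triangular matrix is a lower triangular matrix with all diagonal entries equal to $1$. The paper uses, as given facts, that every invertible $(d\times d)$ real matrix $\boldsymbol{A}$ admits a PLU decomposition $\boldsymbol{A}=\boldsymbol{P}\boldsymbol{L}\boldsymbol{U}$ ($\boldsymbol{P}$ a permutation matrix, $\boldsymbol{L}$ unit lower triangular, $\boldsymbol{U}$ upper triangular), and a QR decomposition $\boldsymbol{A}=\boldsymbol{Q}\boldsymbol{R}$ with $\boldsymbol{Q}$ orthogonal and $\boldsymbol{R}$ upper triangular, which the paper takes to be unique. *)

theory Defs
  imports "HOL-Analysis.Analysis"
begin

text \<open>Square real matrices are indexed by a finite, well-ordered index type 'n
  (so that upper/lower triangularity make sense).\<close>

definition permutation_matrix :: "real^'n^'n \<Rightarrow> bool" where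
  "permutation_matrix P \<longleftrightarrow>
     (\<exists>p. p permutes (UNIV :: 'n set) \<and> P = (\<chi> i j. if j = p i then 1 else 0))"

definition upper_triangular :: "real^('n::{finite,wellorder})^('n::{finite,wellorder}) \<Rightarrow> bool" where
  "upper_triangular A \<longleftrightarrow> (\<forall>i j. j < i \<longrightarrow> A $ i $ j = 0)"

definition unit_lower_triangular :: "real^('n::{finite,wellorder})^('n::{finite,wellorder}) \<Rightarrow> bool" where
  "unit_lower_triangular A \<longleftrightarrow>
     (\<forall>i j. i < j \<longrightarrow> A $ i $ j = 0) \<and> (\<forall>i. A $ i $ i = 1)"

end

theory Submission
  imports Defs
begin

lemma minv:
  fixes A :: "real^'n^'n"
  assumes "invertible A"
  shows "A ** matrix_inv A = mat 1" "matrix_inv A ** A = mat 1"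
proof -
  from assms obtain A' where "A ** A' = mat 1 \<and> A' ** A = mat 1" unfolding invertible_def by blast
  then have "A ** matrix_inv A = mat 1 \<and> matrix_inv A ** A = mat 1"
    unfolding matrix_inv_def by (rule someI)
  then show "A ** matrix_inv A = mat 1" "matrix_inv A ** A = mat 1" by auto
qed

definition SS :: "'n::{finite,wellorder} \<Rightarrow> (real^'n::{finite,wellorder}) set" where
  "SS j = {x. \<forall>i. i \<notin> {..j} \<longrightarrow> x$i = 0}"

lemma SS_sub: "subspace (SS j)"
  unfolding SS_def using subspace_substandard_cart[of "\<lambda>i. i \<notin> {..j}"] subspace_vec_eq by auto

lemma SS_dim:
  fixes j :: "'n::{finite,wellorder}"
  shows "dim (SS j) = card {..j}"
proof -
  have "vec.dim {x::real^'n::{finite,wellorder}. \<forall>i. i \<notin> {..j} \<longrightarrow> x$i = 0} = card {..j}"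
    by (rule dim_substandard_cart)
  then show ?thesis unfolding SS_def dim_vec_eq .
qed

lemma SS_mem: "x \<in> SS j \<Longrightarrow> j < i \<Longrightarrow> x $ i = 0"
  unfolding SS_def by auto

lemma dim_img_inv:
  fixes M :: "real^'n^'n"
  assumes "invertible M"
  shows "dim ((\<lambda>x. M *v x) ` S) = dim S"
proof -
  have "inj ((*v) M)" using assms
    by (rule inj_matrix_vector_mult)
  then show ?thesis
    by (intro dim_image_eq) (auto simp: inj_on_def matrix_vector_mul_linear)
qed

lemma upper_SS:
  fixes R :: "real^'n::{finite,wellorder}^'n::{finite,wellorder}"
  assumes "upper_triangular R" "x \<in> SS j"
  shows "R *v x \<in> SS j"
proof -
  have "(R *v x) $ i = 0" if "j < i" for i
  proof -
    have "R $ i $ k * x $ k = 0" for k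
    proof (cases "k \<le> j")
      case True then have "k < i" using that by auto
      then show ?thesis using assms(1) unfolding upper_triangular_def by auto
    next
      case False then have "j < k" by (simp add: not_le)
      then show ?thesis by (simp add: SS_mem[OF assms(2)])
    qed
    then show ?thesis by (simp add: matrix_vector_mult_def sum.neutral)
  qed
  then show ?thesis unfolding SS_def by auto
qed

lemma upper_inv:
  fixes R :: "real^'n::{finite,wellorder}^'n::{finite,wellorder}"
  assumes "upper_triangular R" "invertible R"
  shows "upper_triangular (matrix_inv R)"
proof -
  have eq: "(\<lambda>x. R *v x) ` SS j = SS j" for j
  proof (rule subspace_dim_equal)
    show "subspace ((\<lambda>x. R *v x) ` SS j)"
      by (rule linear_subspace_image[OF matrix_vector_mul_linear SS_sub])
    show "subspace (SS j)" by (rule SS_sub)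
    show "(\<lambda>x. R *v x) ` SS j \<subseteq> SS j" using upper_SS[OF assms(1)] by auto
    show "dim (SS j) \<le> dim ((\<lambda>x. R *v x) ` SS j)" using dim_img_inv[OF assms(2)] by simp
  qed
  show ?thesis unfolding upper_triangular_def
  proof (intro allI impI)
    fix i j :: 'n assume ij: "j < i"
    have "axis j 1 \<in> SS j" unfolding SS_def by (auto simp: axis_def)
    then obtain x where x: "x \<in> SS j" "axis j 1 = R *v x" using eq[of j] by blast
    have "matrix_inv R *v axis j 1 = x"
      using x(2) assms(2) by (metis minv(2) matrix_vector_mul_assoc matrix_vector_mul_lid)
    moreover have "(matrix_inv R *v axis j 1) $ i = matrix_inv R $ i $ j"
      by (simp add: matrix_vector_mult_def axis_def if_distrib[of "\<lambda>x. _ * x"] sum.delta cong: if_cong)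
    ultimately show "matrix_inv R $ i $ j = 0" using SS_mem[OF x(1) ij] by simp
  qed
qed


lemma construct:
  fixes Q :: "real^'n::{finite,wellorder}^'n::{finite,wellorder}"
  assumes Q: "invertible Q" and fin: "finite A"
  shows "\<exists>b \<sigma>. inj_on \<sigma> A \<and> (\<forall>j\<in>A. b j \<in> (\<lambda>x. Q *v x) ` SS j \<and> b j $ \<sigma> j = 1 \<and>
            (\<forall>i\<in>A. i < j \<longrightarrow> b j $ \<sigma> i = 0))"
  using fin
proof (induction A rule: finite_linorder_max_induct)
  case empty
  then show ?case by auto
next
  case (insert m A)
  from insert.IH obtain b \<sigma> where inj: "inj_on \<sigma> A" and
    bp: "\<forall>j\<in>A. b j \<in> (\<lambda>x. Q *v x) ` SS j \<and> b j $ \<sigma> j = 1 \<and> (\<forall>i\<in>A. i < j \<longrightarrow> b j $ \<sigma> i = 0)"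
    by blast
  define W where "W = (\<lambda>x. Q *v x) ` SS m"
  define Z :: "(real^'n::{finite,wellorder}) set" where "Z = {x. \<forall>i. i \<notin> - (\<sigma> ` A) \<longrightarrow> x$i = 0}"
  have subW: "subspace W" unfolding W_def
    by (rule linear_subspace_image[OF matrix_vector_mul_linear SS_sub])
  have subZ: "subspace Z" unfolding Z_def
    using subspace_substandard_cart[of "\<lambda>i. i \<notin> - (\<sigma> ` A)"] subspace_vec_eq by auto
  have mA: "m \<notin> A" using insert.hyps(2) by auto
  have dW: "dim W = card {..m}" unfolding W_def using dim_img_inv[OF Q] SS_dim by metis
  have "card (insert m A) \<le> card {..m}"
    by (rule card_mono) (use insert.hyps(2) in \<open>auto simp: less_imp_le\<close>)
  then have dW2: "dim W \<ge> card A + 1" using dW mA insert.hyps(1) by simp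
  have "vec.dim {x::real^'n::{finite,wellorder}. \<forall>i. i \<notin> - (\<sigma> ` A) \<longrightarrow> x$i = 0} = card (- (\<sigma> ` A))"
    by (rule dim_substandard_cart)
  then have dZ: "dim Z = card (- (\<sigma> ` A))" unfolding Z_def dim_vec_eq .
  have "card (- (\<sigma> ` A)) = CARD('n) - card A"
    using card_image[OF inj] by (simp add: Compl_eq_Diff_UNIV card_Diff_subset)
  moreover have "card A \<le> CARD('n)" by (simp add: card_mono)
  ultimately have dZ2: "dim Z + card A = CARD('n)" using dZ by simp
  have "dim {x + y |x y. x \<in> W \<and> y \<in> Z} \<le> CARD('n)" by (rule dim_subset_UNIV_cart)
  then have "dim (W \<inter> Z) \<noteq> 0" using dim_sums_Int[OF subW subZ] dW2 dZ2 by linarith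
  then have "\<not> (W \<inter> Z \<subseteq> {0})" by simp
  then obtain v where v: "v \<in> W" "v \<in> Z" "v \<noteq> 0" by blast
  then obtain r where r: "v $ r \<noteq> 0" using vec_eq_iff[of v 0] by auto
  have rA: "r \<notin> \<sigma> ` A" using v(2) r unfolding Z_def by auto
  define b' where "b' = b(m := (1 / v $ r) *\<^sub>R v)"
  define \<sigma>' where "\<sigma>' = \<sigma>(m := r)"
  have vW: "(1 / v $ r) *\<^sub>R v \<in> W" using subW v(1) by (simp add: subspace_scale)
  show ?case
  proof (intro exI conjI ballI impI)
    show "inj_on \<sigma>' (insert m A)" unfolding \<sigma>'_def using inj rA mA
      by (auto simp: inj_on_def)
  next
    fix j assume j: "j \<in> insert m A"
    show "b' j \<in> (\<lambda>x. Q *v x) ` SS j"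
      using j bp vW mA unfolding b'_def W_def by auto
    show "b' j $ \<sigma>' j = 1"
      using j bp mA r unfolding b'_def \<sigma>'_def by auto
    fix i assume i: "i \<in> insert m A" "i < j"
    show "b' j $ \<sigma>' i = 0"
    proof (cases "j = m")
      case True
      then have "i \<in> A" "i \<noteq> m" using i by auto
      then show ?thesis using True v(2) unfolding b'_def \<sigma>'_def Z_def by auto
    next
      case False
      then have "j \<in> A" using j by auto
      then have "i \<noteq> m" using i insert.hyps(2) by auto
      then show ?thesis using False i \<open>j \<in> A\<close> bp unfolding b'_def \<sigma>'_def by auto
    qed
  qed
qed


theorem theorem1:
  fixes Q :: "real^('n::{finite,wellorder})^('n::{finite,wellorder})"
  assumes "orthogonal_matrix Q"
  shows "\<exists>P L U Qt R.
           permutation_matrix P \<and> unit_lower_triangular L \<and> upper_triangular U \<and>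
           Q = P ** L ** U \<and>
           invertible (P ** L) \<and>
           orthogonal_matrix Qt \<and> upper_triangular R \<and> P ** L = Qt ** R \<and>
           invertible R \<and>
           Q = P ** L ** matrix_inv R"
proof -
  have QQ: "transpose Q ** Q = mat 1" "Q ** transpose Q = mat 1"
    using assms unfolding orthogonal_matrix_def by auto
  have Qinv: "invertible Q" using QQ invertible_def by blast
  obtain b \<sigma> where inj: "inj \<sigma>" and
    bp: "\<And>j. b j \<in> (\<lambda>x. Q *v x) ` SS j" "\<And>j. b j $ \<sigma> j = 1"
        "\<And>i j. i < j \<Longrightarrow> b j $ \<sigma> i = 0"
    using construct[OF Qinv, of UNIV] by auto
  have "surj \<sigma>" using inj by (simp add: finite_UNIV_inj_surj)
  then have sp: "\<sigma> permutes UNIV" using inj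
    by (intro bij_imp_permutes) (auto simp: bij_def)
  define p where "p = inv \<sigma>"
  have pp: "p permutes UNIV" unfolding p_def by (rule permutes_inv[OF sp])
  have sp_inv: "\<sigma> (p i) = i" for i unfolding p_def using permutes_inverses(1)[OF sp] by simp
  define P :: "real^'n::{finite,wellorder}^'n::{finite,wellorder}" where "P = (\<chi> i j. if j = p i then 1 else 0)"
  define L :: "real^'n::{finite,wellorder}^'n::{finite,wellorder}" where "L = (\<chi> k j. b j $ \<sigma> k)"
  define B :: "real^'n::{finite,wellorder}^'n::{finite,wellorder}" where "B = (\<chi> i j. b j $ i)"
  define R where "R = transpose Q ** B"
  have perm: "permutation_matrix P" unfolding permutation_matrix_def P_def using pp by blast
  have ul: "unit_lower_triangular L" unfolding unit_lower_triangular_def L_def using bp by simp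
  have PL: "P ** L = B"
    unfolding P_def L_def B_def
    by (simp add: matrix_matrix_mult_def vec_eq_iff if_distrib[of "\<lambda>x. x * _"] sum.delta' sp_inv cong: if_cong)
  have BQR: "B = Q ** R" unfolding R_def
    by (simp add: matrix_mul_assoc QQ(2))
  have Ru: "upper_triangular R" unfolding upper_triangular_def
  proof (intro allI impI)
    fix i j :: 'n assume ij: "j < i"
    obtain x where x: "x \<in> SS j" "b j = Q *v x" using bp(1)[of j] by blast
    have "R $ i $ j = (transpose Q *v b j) $ i"
      unfolding R_def B_def by (simp add: matrix_matrix_mult_def matrix_vector_mult_def)
    also have "\<dots> = x $ i" using x(2) by (simp add: matrix_vector_mul_assoc QQ(1))
    finally show "R $ i $ j = 0" using SS_mem[OF x(1) ij] by simp
  qed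
  have Linv: "invertible L"
  proof -
    have "det L = 1" unfolding L_def
      using det_lowerdiagonal[of L] bp unfolding L_def by simp
    then show ?thesis by (simp add: invertible_det_nz)
  qed
  have Pinv: "invertible P"
  proof -
    have inj_p: "inj p" using pp permutes_inj by blast
    have "P ** transpose P = mat 1"
      unfolding P_def
      by (auto simp: matrix_matrix_mult_def vec_eq_iff mat_def transpose_def if_distrib[of "\<lambda>x. x * _"]
           sum.delta' inj_eq[OF inj_p] cong: if_cong)
    then show ?thesis using invertible_right_inverse by blast
  qed
  have Binv: "invertible B" using PL invertible_mult[OF Pinv Linv] by simp
  have Rinv: "invertible R" unfolding R_def
    using invertible_mult[OF _ Binv] QQ invertible_def orthogonal_matrix_def
    by (metis invertible_left_inverse invertible_right_inverse)
  have Rup: "upper_triangular (matrix_inv R)" by (rule upper_inv[OF Ru Rinv])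
  have QB: "Q = P ** L ** matrix_inv R"
    using PL BQR minv[OF Rinv] by (simp add: matrix_mul_assoc[symmetric] matrix_mul_rid)
  show ?thesis
    apply (rule exI[of _ P], rule exI[of _ L], rule exI[of _ "matrix_inv R"], rule exI[of _ Q], rule exI[of _ R])
    using perm ul Rup QB PL Binv assms Ru BQR Rinv by simp
qed

end
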